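(* Let $m\ge 4$ be an integer, and let $H_m$ be the group defined below. Then: (i) $C_{H_m}((x_1,0)) = \langle (x_1,0),(x_2,0),(0,w) \mid w\in W_m\rangle$ and $C_{H_m}((x_m,0)) = \langle (x_m,0),(x_{m-1},0),(0,w)\mid w\in W_m\rangle$; (ii) $[H_m,H_m]=Z(H_m)=\{(0,w)\in H_m \mid w\in W_m\}$, and this group has order $2^{m-2}$; (iii) $X=\{(v,0)\in H_m\mid v\in V_m\}$ is a transversal to $Z(H_m)$ in $H_m$; (iv) $\langle (x_1,0),\dots,(x_{m-1},0)\rangle \cong H_{m-1}$.
   Context: For an integer $m\ge 3$, let $V_m$ and $W_m$ be vector spaces over $\mathrm{GF}(2)$ of dimensions $m$ and $m-2$, with ordered bases $x_1,\dots,x_m$ and $y_1,\dots,y_{m-2}$ respectively. Let $f_m:V_m\times V_m\to W_m$ be the bilinear map determined on basis vectors by $f_m(x_i,x_j)=0$ if $j\in\{i,i+1\}$, $f_m(x_i,x_j)=y_{j-i-1}$ if $i+2\le j\le m$, and $f_m(x_i,x_j)=0$ if $i>j$. The group $H_m$ has underlying set $V_m\times W_m$ with multiplication $(a,b)\cdot(c,d)=(a+c,\ f_m(a,c)+b+d)$; its identity is $(0,0)$. *)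

theory Defs
  imports "HOL-Algebra.Algebra"
begin

text \<open>Vectors of V_m (resp. W_m) over GF(2) are represented by their support w.r.t. the
  ordered basis x_1..x_m (resp. y_1..y_{m-2}): a subset of {1..m} (resp. {1..m-2}).\<close>

definition vadd :: "nat set \<Rightarrow> nat set \<Rightarrow> nat set" where
  "vadd A B = (A - B) \<union> (B - A)"

text \<open>The bilinear map f_m, extended bilinearly from the basis values:
  the coefficient of y_k in f_m(a,c) is the parity of the number of pairs (i,j) with
  x_i in a, x_j in c, i+2 \<le> j, and j-i-1 = k.\<close>

definition fm :: "nat \<Rightarrow> nat set \<Rightarrow> nat set \<Rightarrow> nat set" where
  "fm m a c = {k \<in> {1..m-2}.
      odd (card {(i,j). i \<in> a \<and> j \<in> c \<and> i + 2 \<le> j \<and> j - i - 1 = k})}"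

definition Hmult :: "nat \<Rightarrow> nat set \<times> nat set \<Rightarrow> nat set \<times> nat set \<Rightarrow> nat set \<times> nat set" where
  "Hmult m p q = (vadd (fst p) (fst q), vadd (vadd (fm m (fst p) (fst q)) (snd p)) (snd q))"

definition Hgrp :: "nat \<Rightarrow> (nat set \<times> nat set) monoid" where
  "Hgrp m = \<lparr>carrier = {p. fst p \<subseteq> {1..m} \<and> snd p \<subseteq> {1..m-2}},
             monoid.mult = Hmult m,
             monoid.one = ({}, {})\<rparr>"

definition centralizer :: "('a, 'b) monoid_scheme \<Rightarrow> 'a \<Rightarrow> 'a set" where
  "centralizer G g = {h \<in> carrier G. h \<otimes>\<^bsub>G\<^esub> g = g \<otimes>\<^bsub>G\<^esub> h}"

definition center :: "('a, 'b) monoid_scheme \<Rightarrow> 'a set" where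
  "center G = {z \<in> carrier G. \<forall>h \<in> carrier G. z \<otimes>\<^bsub>G\<^esub> h = h \<otimes>\<^bsub>G\<^esub> z}"

definition transversal :: "('a, 'b) monoid_scheme \<Rightarrow> 'a set \<Rightarrow> 'a set \<Rightarrow> bool" where
  "transversal G N T \<longleftrightarrow> T \<subseteq> carrier G \<and>
     (\<forall>C \<in> RCOSETS G N. \<exists>!x. x \<in> T \<and> x \<in> C)"

end

theory Submission imports Defs begin

lemma vadd_mem[simp]: "x \<in> vadd A B \<longleftrightarrow> (x \<in> A) \<noteq> (x \<in> B)"
  unfolding vadd_def by auto

lemma odd_card_vadd:
  assumes "finite U" "finite V"
  shows "odd (card (vadd U V)) \<longleftrightarrow> (odd (card U) \<noteq> odd (card V))"
proof -
  have e: "vadd U V = (U - V) \<union> (V - U)" by (auto simp: vadd_def)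
  have c1: "card (vadd U V) = card (U - V) + card (V - U)"
    unfolding e using assms by (subst card_Un_disjoint) auto
  have c2: "card U = card (U - V) + card (U \<inter> V)"
  proof -
    have "U = (U - V) \<union> (U \<inter> V)" by blast
    then have "card U = card ((U - V) \<union> (U \<inter> V))" by simp
    also have "\<dots> = card (U - V) + card (U \<inter> V)" using assms by (intro card_Un_disjoint) auto
    finally show ?thesis .
  qed
  have c3: "card V = card (V - U) + card (U \<inter> V)"
  proof -
    have "V = (V - U) \<union> (U \<inter> V)" by blast
    then have "card V = card ((V - U) \<union> (U \<inter> V))" by simp
    also have "\<dots> = card (V - U) + card (U \<inter> V)" using assms by (intro card_Un_disjoint) auto
    finally show ?thesis .
  qed
  show ?thesis using c1 c2 c3 by presburger
qed

definition Q :: "nat set \<Rightarrow> nat set \<Rightarrow> nat \<Rightarrow> nat set" where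
  "Q a c k = {i \<in> a. i + k + 1 \<in> c}"

lemma fm_mem: "k \<in> fm m a c \<longleftrightarrow> k \<in> {1..m-2} \<and> odd (card (Q a c k))"
proof -
  have "k \<ge> 1 \<Longrightarrow> {(i,j). i \<in> a \<and> j \<in> c \<and> i + 2 \<le> j \<and> j - i - 1 = k}
        = (\<lambda>i. (i, i+k+1)) ` Q a c k"
  proof (intro equalityI subsetI)
    fix p assume k: "k \<ge> 1" and "p \<in> {(i,j). i \<in> a \<and> j \<in> c \<and> i + 2 \<le> j \<and> j - i - 1 = k}"
    then obtain i j where p: "p = (i,j)" "i \<in> a" "j \<in> c" "i + 2 \<le> j" "j - i - 1 = k" by blast
    then have "j = i + k + 1" by linarith
    then show "p \<in> (\<lambda>i. (i, i+k+1)) ` Q a c k" using p unfolding Q_def by auto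
  next
    fix p assume k: "k \<ge> 1" and "p \<in> (\<lambda>i. (i, i+k+1)) ` Q a c k"
    then show "p \<in> {(i,j). i \<in> a \<and> j \<in> c \<and> i + 2 \<le> j \<and> j - i - 1 = k}"
      unfolding Q_def by auto
  qed
  moreover have "inj_on (\<lambda>i. (i, i+k+1)) S" for S by (auto simp: inj_on_def)
  ultimately show ?thesis unfolding fm_def by (auto simp: card_image)
qed

lemma fm_sub: "fm m a c \<subseteq> {1..m-2}" unfolding fm_def by auto

lemma Q_l: "Q (vadd a a') c k = vadd (Q a c k) (Q a' c k)" unfolding Q_def by auto
lemma Q_r: "Q a (vadd c c') k = vadd (Q a c k) (Q a c' k)" unfolding Q_def by auto
lemma Q_fin: "finite a \<Longrightarrow> finite (Q a c k)" unfolding Q_def by auto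

lemma fm_l: "finite a \<Longrightarrow> finite a' \<Longrightarrow> fm m (vadd a a') c = vadd (fm m a c) (fm m a' c)"
  unfolding set_eq_iff by (auto simp add: fm_mem Q_l odd_card_vadd Q_fin)
lemma fm_r: "finite a \<Longrightarrow> fm m a (vadd c c') = vadd (fm m a c) (fm m a c')"
  unfolding set_eq_iff by (auto simp add: fm_mem Q_r odd_card_vadd Q_fin)
lemma fm_empty_l[simp]: "fm m {} c = {}" by (auto simp: fm_mem Q_def)
lemma fm_empty_r[simp]: "fm m a {} = {}" by (auto simp: fm_mem Q_def)

lemma carrier_H: "p \<in> carrier (Hgrp m) \<longleftrightarrow> fst p \<subseteq> {1..m} \<and> snd p \<subseteq> {1..m-2}"
  by (simp add: Hgrp_def)
lemma mult_H[simp]: "(a,b) \<otimes>\<^bsub>Hgrp m\<^esub> (c,d) = (vadd a c, vadd (vadd (fm m a c) b) d)"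
  by (simp add: Hgrp_def Hmult_def)
lemma one_H[simp]: "\<one>\<^bsub>Hgrp m\<^esub> = ({},{})" by (simp add: Hgrp_def)

lemma fin_sub: "a \<subseteq> {1..(m::nat)} \<Longrightarrow> finite a" using finite_subset by blast

lemma group_H: "group (Hgrp m)"
proof (rule groupI)
  fix x y assume "x \<in> carrier (Hgrp m)" "y \<in> carrier (Hgrp m)"
  then show "x \<otimes>\<^bsub>Hgrp m\<^esub> y \<in> carrier (Hgrp m)"
    using fm_sub by (cases x; cases y) (auto simp: carrier_H subset_iff)
next
  show "\<one>\<^bsub>Hgrp m\<^esub> \<in> carrier (Hgrp m)" by (simp add: carrier_H)
next
  fix x y z assume "x \<in> carrier (Hgrp m)" "y \<in> carrier (Hgrp m)" "z \<in> carrier (Hgrp m)"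
  then obtain a b c d e g where xyz: "x = (a,b)" "y = (c,d)" "z = (e,g)"
    and s: "a \<subseteq> {1..m}" "c \<subseteq> {1..m}" "e \<subseteq> {1..m}"
    by (cases x; cases y; cases z) (auto simp: carrier_H)
  have f: "finite a" "finite c" "finite e" using s fin_sub by auto
  have fv: "finite (vadd a c)" "finite (vadd c e)" using f by (auto simp: vadd_def)
  show "x \<otimes>\<^bsub>Hgrp m\<^esub> y \<otimes>\<^bsub>Hgrp m\<^esub> z = x \<otimes>\<^bsub>Hgrp m\<^esub> (y \<otimes>\<^bsub>Hgrp m\<^esub> z)"
    unfolding xyz mult_H using f fv by (simp add: fm_l fm_r set_eq_iff) blast
next
  fix x assume "x \<in> carrier (Hgrp m)"
  then show "\<one>\<^bsub>Hgrp m\<^esub> \<otimes>\<^bsub>Hgrp m\<^esub> x = x" by (cases x) (auto simp: set_eq_iff)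
next
  fix x assume "x \<in> carrier (Hgrp m)"
  then obtain a b where x: "x = (a,b)" "a \<subseteq> {1..m}" "b \<subseteq> {1..m-2}" by (cases x) (auto simp: carrier_H)
  show "\<exists>y\<in>carrier (Hgrp m). y \<otimes>\<^bsub>Hgrp m\<^esub> x = \<one>\<^bsub>Hgrp m\<^esub>"
    by (rule bexI[of _ "(a, vadd b (fm m a a))"]) (use x fm_sub in \<open>auto simp: carrier_H set_eq_iff subset_iff\<close>)
qed


lemma vadd_e1[simp]: "vadd {} A = A" and vadd_e2[simp]: "vadd A {} = A" and vadd_self[simp]: "vadd A A = {}"
  by (auto simp: set_eq_iff)

lemma inv_H: assumes "(a,b) \<in> carrier (Hgrp m)"
  shows "inv\<^bsub>Hgrp m\<^esub> (a,b) = (a, vadd b (fm m a a))"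
proof -
  interpret group "Hgrp m" by (rule group_H)
  show ?thesis
    by (rule inv_equality) (use assms fm_sub in \<open>auto simp: carrier_H set_eq_iff subset_iff\<close>)
qed

lemma fst_mult: "fst (p \<otimes>\<^bsub>Hgrp m\<^esub> q) = vadd (fst p) (fst q)"
  by (cases p; cases q) simp

lemma fst_inv: "p \<in> carrier (Hgrp m) \<Longrightarrow> fst (inv\<^bsub>Hgrp m\<^esub> p) = fst p"
  by (cases p) (simp add: inv_H)

lemma comm_H: "((a,b) \<otimes>\<^bsub>Hgrp m\<^esub> (c,d) = (c,d) \<otimes>\<^bsub>Hgrp m\<^esub> (a,b)) \<longleftrightarrow> fm m a c = fm m c a"
  by (simp add: set_eq_iff) blast

lemma Q_one_r: "k \<ge> 1 \<Longrightarrow> Q a {1} k = {}" unfolding Q_def by auto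
lemma fm_one_r[simp]: "fm m a {Suc 0} = {}" by (auto simp: fm_mem Q_def)

lemma fm_one_l: "fm m {1} a = {k \<in> {1..m-2}. k + 2 \<in> a}"
proof -
  have "Q {1} a k = (if k + 2 \<in> a then {1} else {})" for k unfolding Q_def by auto
  then show ?thesis by (auto simp: fm_mem split: if_splits)
qed

lemma fm_m_l: "a \<subseteq> {1..m} \<Longrightarrow> fm m {m} a = {}"
proof -
  assume a: "a \<subseteq> {1..m}"
  have "Q {m} a k = {}" for k using a unfolding Q_def by auto
  then show ?thesis by (auto simp: fm_mem split: if_splits)
qed

lemma fm_m_r: "fm m a {m} = {k \<in> {1..m-2}. m - k - 1 \<in> a}"
proof -
  have "k \<in> {1..m-2} \<Longrightarrow> Q a {m} k = (if m - k - 1 \<in> a then {m-k-1} else {})" for k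
    unfolding Q_def by auto
  then show ?thesis by (auto simp: fm_mem split: if_splits)
qed

lemma fm_sing: "fm m {i} {j} = (if i + 2 \<le> j \<and> j - i - 1 \<le> m - 2 then {j - i - 1} else {})"
proof -
  have "Q {i} {j} k = (if i + k + 1 = j then {i} else {})" for k unfolding Q_def by auto
  then show ?thesis by (auto simp: fm_mem split: if_splits)
qed

lemma fm_bound: assumes "\<And>i. i \<in> a \<Longrightarrow> 1 \<le> i" "c \<subseteq> {..n}" "k \<in> fm m a c" shows "k + 2 \<le> n"
proof -
  from assms(3) have "odd (card (Q a c k))" by (simp add: fm_mem)
  then have "Q a c k \<noteq> {}" by (metis card.empty even_zero)
  then obtain i where "i \<in> a" "i + k + 1 \<in> c" unfolding Q_def by auto
  with assms show ?thesis by force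
qed

lemma commutator_H:
  assumes "1 \<le> k" "k \<le> m - 2"
  shows "({1},{}) \<otimes>\<^bsub>Hgrp m\<^esub> ({k+2},{}) \<otimes>\<^bsub>Hgrp m\<^esub> inv\<^bsub>Hgrp m\<^esub> ({1},{}) \<otimes>\<^bsub>Hgrp m\<^esub> inv\<^bsub>Hgrp m\<^esub> ({k+2},{})
     = ({},{k})"
proof -
  have c1: "({1},{}) \<in> carrier (Hgrp m)" "({k+2},{}) \<in> carrier (Hgrp m)" using assms by (auto simp: carrier_H)
  have i1: "inv\<^bsub>Hgrp m\<^esub> ({1},{}) = ({1},{})" using c1 by (simp add: inv_H fm_sing)
  have i2: "inv\<^bsub>Hgrp m\<^esub> ({k+2},{}) = ({k+2},{})" using c1 by (simp add: inv_H fm_sing)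
  have s1: "({1::nat},{}) \<otimes>\<^bsub>Hgrp m\<^esub> ({k+2},{}) = (vadd {1} {k+2}, {k})"
    using assms by (simp add: fm_sing)
  have e: "vadd (vadd {Suc 0} {Suc (Suc k)}) {Suc 0} = {Suc (Suc k)}" using assms by auto
  have s2: "(vadd {1} {k+2}, {k}) \<otimes>\<^bsub>Hgrp m\<^esub> ({1},{}) = ({k+2}, {k})"
    by (simp add: e)
  have s3: "({k+2}, {k}) \<otimes>\<^bsub>Hgrp m\<^esub> ({k+2},{}) = ({},{k})"
    by (simp add: fm_sing)
  show ?thesis unfolding i1 i2 s1 s2 s3 ..
qed

lemma gen_sub:
  assumes A: "A \<subseteq> {1..m}" and B: "B \<subseteq> {1..m-2}"
    and fmB: "\<And>a c. a \<subseteq> A \<Longrightarrow> c \<subseteq> A \<Longrightarrow> fm m a c \<subseteq> B"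
    and T: "T \<subseteq> {p. fst p \<subseteq> A \<and> snd p \<subseteq> B}"
  shows "generate (Hgrp m) T \<subseteq> {p. fst p \<subseteq> A \<and> snd p \<subseteq> B}"
proof
  fix h assume "h \<in> generate (Hgrp m) T"
  then show "h \<in> {p. fst p \<subseteq> A \<and> snd p \<subseteq> B}"
  proof induction
    case one then show ?case by simp
  next
    case (incl h) then show ?case using T by auto
  next
    case (inv h)
    obtain a b where h: "h = (a,b)" by (cases h)
    have hs: "fst h \<subseteq> A" "snd h \<subseteq> B" using inv T by auto
    have hc: "h \<in> carrier (Hgrp m)" unfolding carrier_H using hs A B by blast
    have ab: "a \<subseteq> A" "b \<subseteq> B" using hs h by auto
    show ?case using hc fmB[of a a] ab unfolding h by (auto simp: inv_H)
  next
    case (eng h1 h2)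
    obtain a b c d where h: "h1 = (a,b)" "h2 = (c,d)" by (cases h1; cases h2)
    show ?case using eng fmB[of a c] unfolding h by auto
  qed
qed

lemma gen_Z:
  assumes "\<And>k. k \<in> {1..n} \<Longrightarrow> ({},{k}) \<in> generate (Hgrp m) T"
  shows "w \<subseteq> {1..n} \<Longrightarrow> ({},w) \<in> generate (Hgrp m) T"
proof -
  assume w: "w \<subseteq> {1..n}"
  have "finite w" using w finite_subset by blast
  then show ?thesis using w
  proof (induction rule: finite_subset_induct)
    case empty then show ?case using generate.one[of "Hgrp m" T] by simp
  next
    case (insert k F)
    have "({},{k}) \<otimes>\<^bsub>Hgrp m\<^esub> ({},F) \<in> generate (Hgrp m) T"
      using insert assms by (intro generate.eng) auto
    moreover have "({},{k}) \<otimes>\<^bsub>Hgrp m\<^esub> ({},F) = ({}, insert k F)"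
      using insert by auto
    ultimately show ?case by simp
  qed
qed

lemma gen_build:
  assumes gi: "\<And>i. i \<in> A \<Longrightarrow> ({i},{}) \<in> generate (Hgrp m) T"
    and gw: "\<And>w. w \<subseteq> B \<Longrightarrow> ({},w) \<in> generate (Hgrp m) T"
    and fB: "\<And>i a. i \<in> A \<Longrightarrow> a \<subseteq> A \<Longrightarrow> fm m {i} a \<subseteq> B"
    and fA: "finite A"
    and ab: "a \<subseteq> A" "b \<subseteq> B"
  shows "(a,b) \<in> generate (Hgrp m) T"
proof -
  have "finite a" using ab fA finite_subset by blast
  then have a0: "(a,{}) \<in> generate (Hgrp m) T" using ab(1)
  proof (induction rule: finite_subset_induct')
    case empty then show ?case using generate.one[of "Hgrp m" T] by simp
  next
    case (insert i F)
    have "({i},{}) \<otimes>\<^bsub>Hgrp m\<^esub> (F,{}) \<otimes>\<^bsub>Hgrp m\<^esub> ({}, fm m {i} F) \<in> generate (Hgrp m) T"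
      using insert gi gw fB by (intro generate.eng) auto
    moreover have "({i},{}) \<otimes>\<^bsub>Hgrp m\<^esub> (F,{}) \<otimes>\<^bsub>Hgrp m\<^esub> ({}, fm m {i} F) = (insert i F, {})"
      using insert by (auto simp: set_eq_iff)
    ultimately show ?case by simp
  qed
  have "(a,{}) \<otimes>\<^bsub>Hgrp m\<^esub> ({},b) \<in> generate (Hgrp m) T"
    using a0 gw ab by (intro generate.eng) auto
  then show ?thesis by simp
qed


lemma key1: "a \<subseteq> {1..(m::nat)} \<Longrightarrow> ({k \<in> {1..m-2}. k + 2 \<in> a} = {}) \<longleftrightarrow> a \<subseteq> {1,2}"
proof
  assume a: "a \<subseteq> {1..m}" and e: "{k \<in> {1..m-2}. k + 2 \<in> a} = {}"
  show "a \<subseteq> {1,2}"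
  proof
    fix x assume x: "x \<in> a"
    show "x \<in> {1,2}"
    proof (rule ccontr)
      assume "x \<notin> {1,2}"
      moreover have "1 \<le> x" "x \<le> m" using x a by auto
      moreover have "x - 2 + 2 = x" using calculation by auto
      ultimately have "x - 2 \<in> {k \<in> {1..m-2}. k + 2 \<in> a}" using x by (auto simp del: One_nat_def)
      then show False using e by blast
    qed
  qed
qed auto

lemma keym: "a \<subseteq> {1..(m::nat)} \<Longrightarrow> ({k \<in> {1..m-2}. m - k - 1 \<in> a} = {}) \<longleftrightarrow> a \<subseteq> {m-1,m}"
proof
  assume a: "a \<subseteq> {1..m}" and e: "{k \<in> {1..m-2}. m - k - 1 \<in> a} = {}"
  show "a \<subseteq> {m-1,m}"
  proof
    fix x assume x: "x \<in> a"
    show "x \<in> {m-1,m}"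
    proof (rule ccontr)
      assume "x \<notin> {m-1,m}"
      moreover have "1 \<le> x" "x \<le> m" using x a by auto
      ultimately have "m - 1 - x \<in> {k \<in> {1..m-2}. m - k - 1 \<in> a}" using x by auto
      then show False using e by blast
    qed
  qed
next
  assume "a \<subseteq> {1..m}" "a \<subseteq> {m-1,m}"
  then show "{k \<in> {1..m-2}. m - k - 1 \<in> a} = {}" by auto
qed

lemma comm1: assumes "(a,b) \<in> carrier (Hgrp m)"
  shows "((a,b) \<otimes>\<^bsub>Hgrp m\<^esub> ({1},{}) = ({1},{}) \<otimes>\<^bsub>Hgrp m\<^esub> (a,b)) \<longleftrightarrow> a \<subseteq> {1,2}"
proof -
  have a: "a \<subseteq> {1..m}" using assms by (simp add: carrier_H)
  show ?thesis unfolding comm_H using key1[OF a] fm_one_l[of m a] by auto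
qed

lemma commm: assumes "(a,b) \<in> carrier (Hgrp m)"
  shows "((a,b) \<otimes>\<^bsub>Hgrp m\<^esub> ({m},{}) = ({m},{}) \<otimes>\<^bsub>Hgrp m\<^esub> (a,b)) \<longleftrightarrow> a \<subseteq> {m-1,m}"
proof -
  have a: "a \<subseteq> {1..m}" using assms by (simp add: carrier_H)
  show ?thesis unfolding comm_H fm_m_l[OF a] fm_m_r using keym[OF a] by auto
qed

lemma part1:
  assumes "m \<ge> 4"
  shows "centralizer (Hgrp m) ({1}, {}) =
           generate (Hgrp m) ({({1}, {}), ({2}, {})} \<union> {({}, w) | w. w \<subseteq> {1..m-2}})"
proof -
  let ?J = "{p. fst p \<subseteq> {1::nat,2} \<and> snd p \<subseteq> {1..m-2}}"
  let ?T = "{({1}, {}), ({2}, {})} \<union> {({}, w) | w. w \<subseteq> {1..m-2}}"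
  have c: "centralizer (Hgrp m) ({1}, {}) = ?J"
  proof (intro equalityI subsetI)
    fix p assume "p \<in> centralizer (Hgrp m) ({1}, {})"
    then show "p \<in> ?J" using comm1[of "fst p" "snd p" m] by (cases p) (auto simp: centralizer_def carrier_H)
  next
    fix p assume p: "p \<in> ?J"
    then have pc: "p \<in> carrier (Hgrp m)" using assms by (auto simp: carrier_H)
    then show "p \<in> centralizer (Hgrp m) ({1}, {})"
      using p comm1[of "fst p" "snd p" m] by (cases p) (auto simp: centralizer_def)
  qed
  have g1: "generate (Hgrp m) ?T \<subseteq> ?J"
    by (rule gen_sub) (use assms fm_sub in auto)
  have g2: "?J \<subseteq> generate (Hgrp m) ?T"
  proof
    fix p assume p: "p \<in> ?J"
    obtain a b where ab: "p = (a,b)" by (cases p)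
    have "(a,b) \<in> generate (Hgrp m) ?T"
      by (rule gen_build[where A="{1,2}" and B="{1..m-2}"]) (use p ab fm_sub in \<open>auto intro: generate.incl\<close>)
    then show "p \<in> generate (Hgrp m) ?T" using ab by simp
  qed
  show ?thesis using c g1 g2 by blast
qed

lemma partm:
  assumes "m \<ge> 4"
  shows "centralizer (Hgrp m) ({m}, {}) =
           generate (Hgrp m) ({({m}, {}), ({m-1}, {})} \<union> {({}, w) | w. w \<subseteq> {1..m-2}})"
proof -
  let ?J = "{p. fst p \<subseteq> {m-1,m} \<and> snd p \<subseteq> {1..m-2}}"
  let ?T = "{({m}, {}), ({m-1}, {})} \<union> {({}, w) | w. w \<subseteq> {1..m-2}}"
  have c: "centralizer (Hgrp m) ({m}, {}) = ?J"
  proof (intro equalityI subsetI)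
    fix p assume "p \<in> centralizer (Hgrp m) ({m}, {})"
    then show "p \<in> ?J" using commm[of "fst p" "snd p" m] by (cases p) (auto simp: centralizer_def carrier_H)
  next
    fix p assume p: "p \<in> ?J"
    then have pc: "p \<in> carrier (Hgrp m)" using assms by (auto simp: carrier_H)
    then show "p \<in> centralizer (Hgrp m) ({m}, {})"
      using p commm[of "fst p" "snd p" m] by (cases p) (auto simp: centralizer_def)
  qed
  have g1: "generate (Hgrp m) ?T \<subseteq> ?J"
    by (rule gen_sub) (use assms fm_sub in auto)
  have g2: "?J \<subseteq> generate (Hgrp m) ?T"
  proof
    fix p assume p: "p \<in> ?J"
    obtain a b where ab: "p = (a,b)" by (cases p)
    have "(a,b) \<in> generate (Hgrp m) ?T"
      by (rule gen_build[where A="{m-1,m}" and B="{1..m-2}"]) (use p ab fm_sub in \<open>auto intro: generate.incl\<close>)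
    then show "p \<in> generate (Hgrp m) ?T" using ab by simp
  qed
  show ?thesis using c g1 g2 by blast
qed

lemma part_center:
  assumes "m \<ge> 4"
  shows "center (Hgrp m) = {({}, w) | w. w \<subseteq> {1..m-2}}"
proof (intro equalityI subsetI)
  fix p assume p: "p \<in> center (Hgrp m)"
  obtain a b where ab: "p = (a,b)" by (cases p)
  have pc: "(a,b) \<in> carrier (Hgrp m)" using p ab by (simp add: center_def)
  have c1: "({1},{}) \<in> carrier (Hgrp m)" "({m},{}) \<in> carrier (Hgrp m)" using assms by (auto simp: carrier_H)
  have "a \<subseteq> {1,2}" using comm1[OF pc] p c1 ab unfolding center_def by blast
  moreover have "a \<subseteq> {m-1,m}" using commm[OF pc] p c1 ab unfolding center_def by blast
  ultimately have "a \<subseteq> {1,2} \<inter> {m-1,m}" by blast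
  moreover have "{1,2} \<inter> {m-1,m} = ({}::nat set)" using assms by auto
  ultimately have "a = {}" by blast
  then show "p \<in> {({}, w) | w. w \<subseteq> {1..m-2}}" using pc ab by (auto simp: carrier_H)
next
  fix p :: "nat set \<times> nat set" assume "p \<in> {({}, w) | w. w \<subseteq> {1..m-2}}"
  then obtain w where p: "p = ({},w)" "w \<subseteq> {1..m-2}" by blast
  show "p \<in> center (Hgrp m)" unfolding center_def
  proof (intro CollectI conjI ballI)
    show "p \<in> carrier (Hgrp m)" using p by (simp add: carrier_H)
    fix h assume "h \<in> carrier (Hgrp m)"
    then show "p \<otimes>\<^bsub>Hgrp m\<^esub> h = h \<otimes>\<^bsub>Hgrp m\<^esub> p" using p by (cases h) (auto simp: set_eq_iff)
  qed
qed

lemma part_derived: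
  assumes "m \<ge> 4"
  shows "derived (Hgrp m) (carrier (Hgrp m)) = {({}, w) | w. w \<subseteq> {1..m-2}}"
proof -
  interpret group "Hgrp m" by (rule group_H)
  let ?D = "derived_set (Hgrp m) (carrier (Hgrp m))"
  have J: "{p. fst p \<subseteq> {} \<and> snd p \<subseteq> {1..m-2}} = {({}::nat set, w) | w. w \<subseteq> {1..m-2}}" by force
  have T: "?D \<subseteq> {p. fst p \<subseteq> {} \<and> snd p \<subseteq> {1..m-2}}"
  proof
    fix x assume "x \<in> ?D"
    then obtain h1 h2 where h: "h1 \<in> carrier (Hgrp m)" "h2 \<in> carrier (Hgrp m)"
      and x: "x = h1 \<otimes>\<^bsub>Hgrp m\<^esub> h2 \<otimes>\<^bsub>Hgrp m\<^esub> inv\<^bsub>Hgrp m\<^esub> h1 \<otimes>\<^bsub>Hgrp m\<^esub> inv\<^bsub>Hgrp m\<^esub> h2" by blast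
    have xc: "x \<in> carrier (Hgrp m)" using h x by simp
    have "fst x = {}" using h unfolding x by (simp add: fst_mult fst_inv set_eq_iff) blast
    then show "x \<in> {p. fst p \<subseteq> {} \<and> snd p \<subseteq> {1..m-2}}" using xc by (simp add: carrier_H)
  qed
  have g1: "derived (Hgrp m) (carrier (Hgrp m)) \<subseteq> {({}, w) | w. w \<subseteq> {1..m-2}}"
    unfolding derived_def J[symmetric] by (rule gen_sub) (use T fm_sub in auto)
  have g2: "{({}, w) | w. w \<subseteq> {1..m-2}} \<subseteq> derived (Hgrp m) (carrier (Hgrp m))"
  proof
    fix p :: "nat set \<times> nat set" assume "p \<in> {({}, w) | w. w \<subseteq> {1..m-2}}"
    then obtain w where p: "p = ({},w)" "w \<subseteq> {1..m-2}" by blast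
    have "({},w) \<in> generate (Hgrp m) ?D"
    proof (rule gen_Z[OF _ p(2)])
      fix k assume k: "k \<in> {1..m-2}"
      have c: "({1},{}) \<in> carrier (Hgrp m)" "({k+2},{}) \<in> carrier (Hgrp m)" using k by (auto simp: carrier_H)
      have "({},{k}) \<in> ?D" using commutator_H[of k m] k c by force
      then show "({},{k}) \<in> generate (Hgrp m) ?D" by (rule generate.incl)
    qed
    then show "p \<in> derived (Hgrp m) (carrier (Hgrp m))" using p by (simp add: derived_def)
  qed
  show ?thesis using g1 g2 by blast
qed


lemma part_card:
  shows "card {({}::nat set, w) | w. w \<subseteq> {1..m-2}} = 2 ^ (m - 2)"
proof -
  have "{({}::nat set, w) | w. w \<subseteq> {1..m-2}} = (\<lambda>w. ({}::nat set, w)) ` Pow {1..m-2}" by auto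
  moreover have "inj_on (\<lambda>w. ({}::nat set, w)) (Pow {1..m-2})" by (auto simp: inj_on_def)
  ultimately have "card {({}::nat set, w) | w. w \<subseteq> {1..m-2}} = card (Pow {1..m-2::nat})"
    using card_image by metis
  also have "\<dots> = 2 ^ (m - 2)" by (simp add: card_Pow)
  finally show ?thesis .
qed

lemma part_trans:
  assumes "m \<ge> 4"
  shows "transversal (Hgrp m) {({}, w) | w. w \<subseteq> {1..m-2}} {(v, {}) | v. v \<subseteq> {1..m}}"
  unfolding transversal_def
proof (intro conjI ballI)
  show "{(v, {}) | v. v \<subseteq> {1..m}} \<subseteq> carrier (Hgrp m)" by (auto simp: carrier_H)
  fix C assume "C \<in> rcosets\<^bsub>Hgrp m\<^esub> {({}, w) | w. w \<subseteq> {1..m-2}}"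
  then obtain g where g: "g \<in> carrier (Hgrp m)" and C: "C = (\<Union>h\<in>{({}, w) | w. w \<subseteq> {1..m-2}}. {h \<otimes>\<^bsub>Hgrp m\<^esub> g})"
    unfolding RCOSETS_def r_coset_def by blast
  obtain a b where ab: "g = (a,b)" by (cases g)
  have abc: "a \<subseteq> {1..m}" "b \<subseteq> {1..m-2}" using g ab by (auto simp: carrier_H)
  have mw: "({},w) \<otimes>\<^bsub>Hgrp m\<^esub> (a,b) = (a, vadd w b)" for w by simp
  have C2: "C = {(a, vadd w b) | w. w \<subseteq> {1..m-2}}"
  proof (intro equalityI subsetI)
    fix x assume "x \<in> C"
    then obtain w where "w \<subseteq> {1..m-2}" "x = ({},w) \<otimes>\<^bsub>Hgrp m\<^esub> (a,b)" unfolding C ab by blast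
    then show "x \<in> {(a, vadd w b) | w. w \<subseteq> {1..m-2}}" unfolding mw by blast
  next
    fix x assume "x \<in> {(a, vadd w b) | w. w \<subseteq> {1..m-2}}"
    then obtain w where "w \<subseteq> {1..m-2}" "x = ({},w) \<otimes>\<^bsub>Hgrp m\<^esub> (a,b)" unfolding mw by blast
    then show "x \<in> C" unfolding C ab by blast
  qed
  show "\<exists>!x. x \<in> {(v, {}) | v. v \<subseteq> {1..m}} \<and> x \<in> C"
  proof (rule ex1I[of _ "(a,{})"])
    show "(a,{}) \<in> {(v, {}) | v. v \<subseteq> {1..m}} \<and> (a,{}) \<in> C"
      unfolding C2 using abc by (auto intro!: exI[of _ b])
  next
    fix y assume "y \<in> {(v, {}) | v. v \<subseteq> {1..m}} \<and> y \<in> C"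
    then show "y = (a,{})" unfolding C2 by auto
  qed
qed

lemma fm_eq_pred: assumes "a \<subseteq> {1..m-1}" "c \<subseteq> {1..m-1}"
  shows "fm m a c = fm (m-1) a c"
proof -
  have b: "k \<in> fm m a c \<Longrightarrow> k + 2 \<le> m - 1" for k
    by (rule fm_bound[of a c "m-1"]) (use assms in auto)
  show ?thesis
  proof (intro equalityI subsetI)
    fix k assume k: "k \<in> fm m a c"
    have "k + 2 \<le> m - 1" using b k .
    then show "k \<in> fm (m-1) a c" using k by (auto simp: fm_mem)
  next
    fix k assume "k \<in> fm (m-1) a c" then show "k \<in> fm m a c" by (auto simp: fm_mem)
  qed
qed

lemma part_iso:
  assumes "m \<ge> 4"
  shows "subgroup_generated (Hgrp m) {({i}, {}) | i. i \<in> {1..m-1}} \<cong> Hgrp (m - 1)"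
proof -
  let ?S = "{({i}, {}::nat set) | i. i \<in> {1..m-1}}"
  let ?K = "{p. fst p \<subseteq> {1..m-1} \<and> snd p \<subseteq> {1..m-3}}"
  have Sc: "carrier (Hgrp m) \<inter> ?S = ?S" by (auto simp: carrier_H)
  have fmB: "fm m a c \<subseteq> {1..m-3}" if "a \<subseteq> {1..m-1}" "c \<subseteq> {1..m-1}" for a c
  proof
    fix k assume k: "k \<in> fm m a c"
    have "k + 2 \<le> m - 1" by (rule fm_bound[of a c "m-1"]) (use that k in auto)
    moreover have "1 \<le> k" using k fm_sub[of m a c] by auto
    ultimately show "k \<in> {1..m-3}" by auto
  qed
  have g1: "generate (Hgrp m) ?S \<subseteq> ?K"
    by (rule gen_sub) (use assms fmB in auto)
  have gw: "({},w) \<in> generate (Hgrp m) ?S" if w: "w \<subseteq> {1..m-3}" for w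
  proof (rule gen_Z[OF _ w])
    fix k assume k: "k \<in> {1..m-3}"
    have in1: "({1},{}) \<in> ?S" "({k+2},{}) \<in> ?S" using k assms by auto
    have "({1},{}) \<otimes>\<^bsub>Hgrp m\<^esub> ({k+2},{}) \<otimes>\<^bsub>Hgrp m\<^esub> inv\<^bsub>Hgrp m\<^esub> ({1},{}) \<otimes>\<^bsub>Hgrp m\<^esub> inv\<^bsub>Hgrp m\<^esub> ({k+2},{})
        \<in> generate (Hgrp m) ?S"
      using in1 by (intro generate.eng generate.incl generate.inv)
    then show "({},{k}) \<in> generate (Hgrp m) ?S" using commutator_H[of k m] k by auto
  qed
  have g2: "?K \<subseteq> generate (Hgrp m) ?S"
  proof
    fix p assume p: "p \<in> ?K"
    obtain a b where ab: "p = (a,b)" by (cases p)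
    have "(a,b) \<in> generate (Hgrp m) ?S"
      by (rule gen_build[where A="{1..m-1}" and B="{1..m-3}"]) (use p ab fmB gw in \<open>auto intro: generate.incl\<close>)
    then show "p \<in> generate (Hgrp m) ?S" using ab by simp
  qed
  have cK: "carrier (subgroup_generated (Hgrp m) ?S) = ?K"
    unfolding carrier_subgroup_generated Sc using g1 g2 by blast
  have cK2: "carrier (Hgrp (m-1)) = ?K"
    unfolding Hgrp_def by (simp add: diff_diff_left numeral_3_eq_3)
  have "id \<in> iso (subgroup_generated (Hgrp m) ?S) (Hgrp (m-1))"
    unfolding iso_def hom_def
  proof (intro CollectI conjI ballI)
    show "id \<in> carrier (subgroup_generated (Hgrp m) ?S) \<rightarrow> carrier (Hgrp (m - 1))"
      unfolding cK cK2 by auto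
    show "bij_betw id (carrier (subgroup_generated (Hgrp m) ?S)) (carrier (Hgrp (m - 1)))"
      unfolding cK cK2 by simp
    fix x y assume "x \<in> carrier (subgroup_generated (Hgrp m) ?S)" "y \<in> carrier (subgroup_generated (Hgrp m) ?S)"
    then have xy: "fst x \<subseteq> {1..m-1}" "fst y \<subseteq> {1..m-1}" unfolding cK by auto
    obtain a b c d where xy2: "x = (a,b)" "y = (c,d)" by (cases x; cases y)
    have fe: "fm m a c = fm (m-1) a c" using fm_eq_pred xy xy2 by simp
    show "id (x \<otimes>\<^bsub>subgroup_generated (Hgrp m) ?S\<^esub> y) = id x \<otimes>\<^bsub>Hgrp (m - 1)\<^esub> id y"
      unfolding xy2 id_def subgroup_generated_def by (simp add: fe)
  qed
  then show ?thesis unfolding is_iso_def by blast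
qed

theorem lemma2p1:
  fixes m :: nat
  assumes "m \<ge> 4"
  shows "centralizer (Hgrp m) ({1}, {}) =
           generate (Hgrp m) ({({1}, {}), ({2}, {})} \<union> {({}, w) | w. w \<subseteq> {1..m-2}})
       \<and> centralizer (Hgrp m) ({m}, {}) =
           generate (Hgrp m) ({({m}, {}), ({m-1}, {})} \<union> {({}, w) | w. w \<subseteq> {1..m-2}})
       \<and> derived (Hgrp m) (carrier (Hgrp m)) = center (Hgrp m)
       \<and> center (Hgrp m) = {({}, w) | w. w \<subseteq> {1..m-2}}
       \<and> card (center (Hgrp m)) = 2 ^ (m - 2)
       \<and> transversal (Hgrp m) (center (Hgrp m)) {(v, {}) | v. v \<subseteq> {1..m}}
       \<and> subgroup_generated (Hgrp m) {({i}, {}) | i. i \<in> {1..m-1}} \<cong> Hgrp (m - 1)"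
  using part1[OF assms] partm[OF assms] part_derived[OF assms] part_center[OF assms]
    part_card[of m] part_trans[OF assms] part_iso[OF assms] by simp

end
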